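(* Let $\alpha\ge0$, $\mu\ge0$. For every $h\in C_B^2[0,\infty)$, every $n\in\mathbb{N}$ and every $x\in[0,\infty)$, $$|T_n(h;x)-h(x)|\le(\Delta_1+\Delta_2)\|h\|_{C_B^2[0,\infty)},$$ where $\Delta_1=\dfrac{2\alpha x^2}{n}$ and $\Delta_2=\dfrac{1}{n^2}x\left(4x^3\alpha^2+4\alpha x+n\right)+\dfrac{2\mu x}{n}\dfrac{e_\mu(-nx)}{e_\mu(nx)}$.
   Context: $C_B[0,\infty)$ denotes the space of uniformly continuous bounded functions on $[0,\infty)$ with the sup norm $\|\cdot\|_{C_B[0,\infty)}$; $C_B^2[0,\infty)=\{g\in C_B[0,\infty): g',g''\in C_B[0,\infty)\}$ with norm $\|g\|_{C_B^2[0,\infty)}=\|g\|_{C_B}+\|g'\|_{C_B}+\|g''\|_{C_B}$. For $\mu>-\tfrac12$ define $\gamma_\mu(2k)=\dfrac{2^{2k}k!\,\Gamma(k+\mu+1/2)}{\Gamma(\mu+1/2)}$ and $\gamma_\mu(2k+1)=\dfrac{2^{2k+1}k!\,\Gamma(k+\mu+3/2)}{\Gamma(\mu+1/2)}$, $k\ge0$; $e_\mu(x)=\sum_{k\ge0} x^k/\gamma_\mu(k)$; $\theta_k=0$ if $k$ is even and $\theta_k=1$ if $k$ is odd. Let $h_k^\mu(\xi,\alpha)=\gamma_\mu(k)\sum_{j=0}^{\lfloor k/2\rfloor}\dfrac{\alpha^j\xi^{k-2j}}{j!\,\gamma_\mu(k-2j)}$. For $\alpha\ge0,\mu\ge0$,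 $n\in\mathbb{N}$ and $x\in[0,\infty)$ define $$T_n(f;x)=\frac{1}{e^{\alpha x^2}e_\mu(nx)}\sum_{k=0}^\infty \frac{h_k^\mu(n,\alpha)}{\gamma_\mu(k)}x^k f\!\left(\frac{k+2\mu\theta_k}{n}\right).$$ *)

theory Defs
  imports "HOL-Analysis.Analysis"
begin

definition gamma_mu :: "real \<Rightarrow> nat \<Rightarrow> real" where
  "gamma_mu \<mu> k =
     (if even k then 2 ^ k * fact (k div 2) * Gamma (real (k div 2) + \<mu> + 1/2) / Gamma (\<mu> + 1/2)
      else 2 ^ k * fact (k div 2) * Gamma (real (k div 2) + \<mu> + 3/2) / Gamma (\<mu> + 1/2))"

definition e_mu :: "real \<Rightarrow> real \<Rightarrow> real" where
  "e_mu \<mu> x = (\<Sum>k. x ^ k / gamma_mu \<mu> k)"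

definition theta :: "nat \<Rightarrow> real" where
  "theta k = (if even k then 0 else 1)"

definition hk :: "real \<Rightarrow> nat \<Rightarrow> real \<Rightarrow> real \<Rightarrow> real" where
  "hk \<mu> k \<xi> \<alpha> = gamma_mu \<mu> k *
     (\<Sum>j = 0..k div 2. \<alpha> ^ j * \<xi> ^ (k - 2 * j) / (fact j * gamma_mu \<mu> (k - 2 * j)))"

definition T_op :: "real \<Rightarrow> real \<Rightarrow> nat \<Rightarrow> (real \<Rightarrow> real) \<Rightarrow> real \<Rightarrow> real" where
  "T_op \<alpha> \<mu> n f x =
     1 / (exp (\<alpha> * x\<^sup>2) * e_mu \<mu> (real n * x)) *
     (\<Sum>k. hk \<mu> k (real n) \<alpha> / gamma_mu \<mu> k * x ^ k * f ((real k + 2 * \<mu> * theta k) / real n))"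

definition CB :: "(real \<Rightarrow> real) \<Rightarrow> bool" where
  "CB g \<longleftrightarrow> uniformly_continuous_on {0..} g \<and> bounded (g ` {0..})"

definition sup_norm :: "(real \<Rightarrow> real) \<Rightarrow> real" where
  "sup_norm g = (SUP x\<in>{0..}. \<bar>g x\<bar>)"

definition CB2 :: "(real \<Rightarrow> real) \<Rightarrow> (real \<Rightarrow> real) \<Rightarrow> (real \<Rightarrow> real) \<Rightarrow> bool" where
  "CB2 g g1 g2 \<longleftrightarrow> CB g \<and> CB g1 \<and> CB g2 \<and>
     (\<forall>x\<ge>0. (g has_real_derivative g1 x) (at x within {0..})) \<and>
     (\<forall>x\<ge>0. (g1 has_real_derivative g2 x) (at x within {0..}))"

definition CB2_norm :: "(real \<Rightarrow> real) \<Rightarrow> (real \<Rightarrow> real) \<Rightarrow> (real \<Rightarrow> real) \<Rightarrow> real" where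
  "CB2_norm g g1 g2 = sup_norm g + sup_norm g1 + sup_norm g2"

end

theory Submission
  imports Defs
begin

lemma Gp1: "(z::real) > 0 \<Longrightarrow> Gamma (z + 1) = z * Gamma z"
  by (rule Gamma_plus1) (auto dest: nonpos_Ints_nonpos)

lemma gamma_pos: assumes "\<mu> \<ge> 0" shows "gamma_mu \<mu> k > 0"
  proof -
  have "Gamma (\<mu> + 1/2) > 0" "Gamma (real (k div 2) + \<mu> + 1/2) > 0" "Gamma (real (k div 2) + \<mu> + 3/2) > 0"
    using assms by (auto intro!: Gamma_real_pos)
  thus ?thesis by (auto simp: gamma_mu_def intro!: divide_pos_pos mult_pos_pos)
qed

lemma gamma_0: assumes "\<mu> \<ge> 0" shows "gamma_mu \<mu> 0 = 1"
proof -
  have "Gamma (\<mu> + 1/2) > 0" using assms by auto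
  thus ?thesis by (simp add: gamma_mu_def)
qed

definition dd :: "real \<Rightarrow> nat \<Rightarrow> real" where "dd \<mu> m = real m + 2 * \<mu> * theta m"

lemma gamma_Suc: assumes "\<mu> \<ge> 0" shows "gamma_mu \<mu> (Suc k) = dd \<mu> (Suc k) * gamma_mu \<mu> k"
proof -
  have G0: "Gamma (\<mu> + 1/2) > 0" using assms by auto
  show ?thesis
  proof (cases "even k")
  case True
  then obtain m where k: "k = 2*m" by blast
  have g: "Gamma (real m + \<mu> + 3/2) = (real m + \<mu> + 1/2) * Gamma (real m + \<mu> + 1/2)"
    using Gp1[of "real m + \<mu> + 1/2"] assms by (simp add: add_ac)
  have l: "gamma_mu \<mu> (Suc k) = 2^(2*m+1) * fact m * Gamma (real m + \<mu> + 3/2) / Gamma (\<mu> + 1/2)"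
    using k by (simp add: gamma_mu_def)
  have r: "gamma_mu \<mu> k = 2^(2*m) * fact m * Gamma (real m + \<mu> + 1/2) / Gamma (\<mu> + 1/2)"
    using k by (simp add: gamma_mu_def)
  show ?thesis unfolding l r g using k G0
    by (simp add: dd_def theta_def field_simps)
next
  case False
  then obtain m where k: "k = 2*m+1" using oddE by blast
  have g: "Gamma (real (Suc m) + \<mu> + 1/2) = (real m + \<mu> + 1/2) * Gamma (real m + \<mu> + 1/2)"
    using Gp1[of "real m + \<mu> + 1/2"] assms by (simp add: add_ac)
  have g2: "Gamma (real m + \<mu> + 3/2) = (real m + \<mu> + 1/2) * Gamma (real m + \<mu> + 1/2)"
    using Gp1[of "real m + \<mu> + 1/2"] assms by (simp add: add_ac)
  have l: "gamma_mu \<mu> (Suc k) = 2^(2*m+2) * fact (Suc m) * Gamma (real (Suc m) + \<mu> + 1/2) / Gamma (\<mu> + 1/2)"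
    using k by (simp add: gamma_mu_def)
  have r: "gamma_mu \<mu> k = 2^(2*m+1) * fact m * Gamma (real m + \<mu> + 3/2) / Gamma (\<mu> + 1/2)"
    using k by (simp add: gamma_mu_def)
  show ?thesis unfolding l r g g2 using k G0
    by (simp add: dd_def theta_def field_simps)
qed
qed


lemma dd_ge: assumes "\<mu> \<ge> 0" shows "dd \<mu> m \<ge> real m"
  using assms by (simp add: dd_def theta_def)

lemma dd_0: "dd \<mu> 0 = 0" by (simp add: dd_def theta_def)

lemma dd_Suc: "dd \<mu> (Suc m) = dd \<mu> m + 1 + 2 * \<mu> * (-1)^m"
  by (cases "even m") (simp_all add: dd_def theta_def)

lemma gamma_ge_fact: assumes "\<mu> \<ge> 0" shows "gamma_mu \<mu> k \<ge> fact k"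
proof (induction k)
  case 0 thus ?case using gamma_0[OF assms] by simp
next
  case (Suc k)
  have "fact (Suc k) = real (Suc k) * fact k" by simp
  also have "\<dots> \<le> dd \<mu> (Suc k) * gamma_mu \<mu> k"
    by (rule mult_mono) (use Suc dd_ge[OF assms, of "Suc k"] in auto)
  finally show ?case using gamma_Suc[OF assms] by simp
qed

lemma B_abs_summable: assumes "\<mu> \<ge> 0" shows "summable (\<lambda>m. norm (y^m / gamma_mu \<mu> m))"
proof (rule summable_comparison_test)
  show "summable (\<lambda>m. \<bar>y\<bar>^m / fact m)"
    using summable_exp[of "\<bar>y\<bar>"] by (simp add: divide_inverse_commute)
  show "\<exists>N. \<forall>m\<ge>N. norm (norm (y ^ m / gamma_mu \<mu> m)) \<le> \<bar>y\<bar> ^ m / fact m"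
  proof (intro exI allI impI)
    fix m :: nat
    have "norm (norm (y ^ m / gamma_mu \<mu> m)) = \<bar>y\<bar>^m / gamma_mu \<mu> m"
      using gamma_pos[OF assms, of m] by (simp add: abs_mult power_abs)
    also have "\<dots> \<le> \<bar>y\<bar>^m / fact m"
      by (rule divide_left_mono) (use gamma_ge_fact[OF assms, of m] gamma_pos[OF assms, of m] in auto)
    finally show "norm (norm (y ^ m / gamma_mu \<mu> m)) \<le> \<bar>y\<bar> ^ m / fact m" .
  qed
qed

lemma B_sums: assumes "\<mu> \<ge> 0" shows "(\<lambda>m. y^m / gamma_mu \<mu> m) sums e_mu \<mu> y"
  unfolding e_mu_def by (rule summable_sums, rule summable_norm_cancel, rule B_abs_summable[OF assms])

lemma dB_Suc: assumes "\<mu> \<ge> 0"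
  shows "dd \<mu> (Suc m) * (y^(Suc m) / gamma_mu \<mu> (Suc m)) = y * (y^m / gamma_mu \<mu> m)"
proof -
  have "dd \<mu> (Suc m) > 0" using dd_ge[OF assms, of "Suc m"] by simp
  thus ?thesis using gamma_Suc[OF assms, of m] gamma_pos[OF assms, of m] by (simp add: field_simps)
qed

lemma dB_sums: assumes "\<mu> \<ge> 0"
  shows "(\<lambda>m. dd \<mu> m * (y^m / gamma_mu \<mu> m)) sums (y * e_mu \<mu> y)"
proof -
  have "(\<lambda>m. dd \<mu> (Suc m) * (y^(Suc m) / gamma_mu \<mu> (Suc m))) sums (y * e_mu \<mu> y)"
    unfolding dB_Suc[OF assms] by (rule sums_mult, rule B_sums[OF assms])
  thus ?thesis by (subst (asm) sums_Suc_iff) (simp add: dd_0)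
qed

lemma d2B_sums: assumes "\<mu> \<ge> 0"
  shows "(\<lambda>m. (dd \<mu> m)^2 * (y^m / gamma_mu \<mu> m)) sums
     (y * (y * e_mu \<mu> y + e_mu \<mu> y + 2 * \<mu> * e_mu \<mu> (-y)))"
proof -
  have eq: "(dd \<mu> (Suc m))^2 * (y^(Suc m) / gamma_mu \<mu> (Suc m)) =
     y * (dd \<mu> m * (y^m / gamma_mu \<mu> m) + y^m / gamma_mu \<mu> m + 2 * \<mu> * ((-y)^m / gamma_mu \<mu> m))" for m
  proof -
    have "(dd \<mu> (Suc m))^2 * (y^(Suc m) / gamma_mu \<mu> (Suc m)) = dd \<mu> (Suc m) * (y * (y^m / gamma_mu \<mu> m))"
      using dB_Suc[OF assms, of m y] by (simp only: power2_eq_square mult.assoc)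
    also have "\<dots> = y * (dd \<mu> m * (y^m / gamma_mu \<mu> m) + y^m / gamma_mu \<mu> m + 2 * \<mu> * ((-y)^m / gamma_mu \<mu> m))"
      unfolding dd_Suc power_minus[of y] by (simp add: distrib_left distrib_right mult_ac add_divide_distrib)
    finally show ?thesis .
  qed
  have "(\<lambda>m. (dd \<mu> (Suc m))^2 * (y^(Suc m) / gamma_mu \<mu> (Suc m))) sums
     (y * (y * e_mu \<mu> y + e_mu \<mu> y + 2 * \<mu> * e_mu \<mu> (-y)))"
    unfolding eq
    by (intro sums_mult sums_add dB_sums B_sums assms)
  thus ?thesis by (subst (asm) sums_Suc_iff) (simp add: dd_0)
qed


lemma A_sums: "(\<lambda>j. a^j / fact j) sums exp (a::real)"
  using exp_converges[of a] by (simp add: divide_inverse_commute)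

lemma jA_sums: "(\<lambda>j. real j * (a^j / fact j)) sums (a * exp (a::real))"
proof -
  have "(\<lambda>j. real (Suc j) * (a^(Suc j) / fact (Suc j))) = (\<lambda>j. a * (a^j / fact j))"
  proof (rule ext)
    fix j
    have "0 < (fact j::real) + fact j * real j" by (simp add: add_pos_nonneg)
    thus "real (Suc j) * (a^(Suc j) / fact (Suc j)) = a * (a^j / fact j)" by (simp add: field_simps)
  qed
  hence "(\<lambda>j. real (Suc j) * (a^(Suc j) / fact (Suc j))) sums (a * exp a)"
    using sums_mult[OF A_sums, of a] by simp
  thus ?thesis by (subst (asm) sums_Suc_iff) simp
qed

lemma j2A_sums: "(\<lambda>j. (real j)^2 * (a^j / fact j)) sums (a * (a * exp (a::real) + exp a))"
proof -
  have "(\<lambda>j. (real (Suc j))^2 * (a^(Suc j) / fact (Suc j))) = (\<lambda>j. a * (real j * (a^j / fact j) + a^j / fact j))"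
  proof (rule ext)
    fix j
    have "0 < (fact j::real) + fact j * real j" by (simp add: add_pos_nonneg)
    thus "(real (Suc j))^2 * (a^(Suc j) / fact (Suc j)) = a * (real j * (a^j / fact j) + a^j / fact j)"
      by (simp add: field_simps power2_eq_square)
  qed
  hence "(\<lambda>j. (real (Suc j))^2 * (a^(Suc j) / fact (Suc j))) sums (a * (a * exp a + exp a))"
    using sums_mult[OF sums_add[OF jA_sums A_sums], of a] by simp
  thus ?thesis by (subst (asm) sums_Suc_iff) simp
qed

lemma sparse_sums:
  assumes "(\<lambda>j. f (2*j)) sums s" "\<And>i. odd i \<Longrightarrow> f i = 0"
  shows "f sums s"
proof -
  have sm: "strict_mono (\<lambda>j::nat. 2*j)" by (rule strict_monoI) simp
  have "\<And>n. n \<notin> range (\<lambda>j::nat. 2*j) \<Longrightarrow> f n = 0"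
    using assms(2) by (metis evenE rangeI)
  from sums_mono_reindex[of "\<lambda>j. 2*j" f s, OF sm this] assms(1) show ?thesis by simp
qed

definition Ap :: "real \<Rightarrow> nat \<Rightarrow> real" where
  "Ap a i = (if even i then a^(i div 2) / fact (i div 2) else 0)"

lemma Ap_sums: "Ap a sums exp a"
  by (rule sparse_sums) (auto simp: Ap_def A_sums)

lemma iAp_sums: "(\<lambda>i. real i * Ap a i) sums (2 * a * exp a)"
proof (rule sparse_sums)
  show "(\<lambda>j. real (2*j) * Ap a (2*j)) sums (2 * a * exp a)"
    using sums_mult[OF jA_sums, of 2] by (simp add: Ap_def mult_ac)
qed (auto simp: Ap_def)

lemma i2Ap_sums: "(\<lambda>i. (real i)^2 * Ap a i) sums (4 * (a * (a * exp a + exp a)))"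
proof (rule sparse_sums)
  show "(\<lambda>j. (real (2*j))^2 * Ap a (2*j)) sums (4 * (a * (a * exp a + exp a)))"
    using sums_mult[OF j2A_sums, of 4] by (simp add: Ap_def mult_ac power2_eq_square)
qed (auto simp: Ap_def)

lemma cp_sums:
  fixes a b :: "nat \<Rightarrow> real"
  assumes "a sums sa" "b sums sb" "\<And>i. a i \<ge> 0" "\<And>i. b i \<ge> 0"
  shows "(\<lambda>k. \<Sum>i\<le>k. a i * b (k - i)) sums (sa * sb)"
proof -
  have "summable (\<lambda>k. norm (a k))" "summable (\<lambda>k. norm (b k))"
    using assms by (auto simp: sums_iff)
  from Cauchy_product_sums[OF this] show ?thesis using assms by (simp add: sums_iff)
qed


definition Bf :: "real \<Rightarrow> real \<Rightarrow> nat \<Rightarrow> real" where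
  "Bf \<mu> y m = y^m / gamma_mu \<mu> m"

definition cc :: "real \<Rightarrow> real \<Rightarrow> real \<Rightarrow> nat \<Rightarrow> real" where
  "cc \<mu> a y k = (\<Sum>i\<le>k. Ap a i * Bf \<mu> y (k - i))"

lemma dd_split: assumes "i \<le> k" "even i" shows "dd \<mu> k = real i + dd \<mu> (k - i)"
proof -
  have "even (k - i) = even k" using assms by auto
  thus ?thesis using assms by (simp add: dd_def theta_def)
qed

lemma term1: assumes "i \<le> k"
  shows "Ap a i * Bf \<mu> y (k - i) * dd \<mu> k = real i * Ap a i * Bf \<mu> y (k - i) + Ap a i * (dd \<mu> (k-i) * Bf \<mu> y (k - i))"
proof (cases "even i")
  case True thus ?thesis using dd_split[OF assms True, of \<mu>] by (simp add: algebra_simps)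
qed (simp add: Ap_def)

lemma term2: assumes "i \<le> k"
  shows "Ap a i * Bf \<mu> y (k - i) * (dd \<mu> k)^2 = (real i)^2 * Ap a i * Bf \<mu> y (k - i)
     + 2 * ((real i * Ap a i) * (dd \<mu> (k-i) * Bf \<mu> y (k - i))) + Ap a i * ((dd \<mu> (k-i))^2 * Bf \<mu> y (k - i))"
proof (cases "even i")
  case True thus ?thesis using dd_split[OF assms True, of \<mu>] by (simp add: algebra_simps power2_eq_square)
qed (simp add: Ap_def)

lemma Ap_nonneg: "a \<ge> 0 \<Longrightarrow> Ap a i \<ge> 0" by (simp add: Ap_def)
lemma Bf_nonneg: "\<mu> \<ge> 0 \<Longrightarrow> y \<ge> 0 \<Longrightarrow> Bf \<mu> y i \<ge> 0"
  using gamma_pos[of \<mu> i] by (simp add: Bf_def)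
lemma dd_nonneg: "\<mu> \<ge> 0 \<Longrightarrow> dd \<mu> i \<ge> 0"
  using dd_ge[of \<mu> i] by simp

lemma cc_nonneg: "\<mu> \<ge> 0 \<Longrightarrow> y \<ge> 0 \<Longrightarrow> a \<ge> 0 \<Longrightarrow> cc \<mu> a y k \<ge> 0"
  unfolding cc_def by (intro sum_nonneg mult_nonneg_nonneg Ap_nonneg Bf_nonneg)

lemma Bf_sums: "\<mu> \<ge> 0 \<Longrightarrow> Bf \<mu> y sums e_mu \<mu> y"
  using B_sums[of \<mu> y] by (simp add: Bf_def[abs_def])
lemma dBf_sums: "\<mu> \<ge> 0 \<Longrightarrow> (\<lambda>m. dd \<mu> m * Bf \<mu> y m) sums (y * e_mu \<mu> y)"
  using dB_sums[of \<mu> y] by (simp add: Bf_def[abs_def])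
lemma d2Bf_sums: "\<mu> \<ge> 0 \<Longrightarrow> (\<lambda>m. (dd \<mu> m)^2 * Bf \<mu> y m) sums
     (y * (y * e_mu \<mu> y + e_mu \<mu> y + 2 * \<mu> * e_mu \<mu> (-y)))"
  using d2B_sums[of \<mu> y] by (simp add: Bf_def[abs_def])

lemma cc_sums0: assumes "\<mu> \<ge> 0" "y \<ge> 0" "a \<ge> 0"
  shows "cc \<mu> a y sums (exp a * e_mu \<mu> y)"
  unfolding cc_def[abs_def]
  by (rule cp_sums) (use assms in \<open>auto simp: Ap_sums Bf_sums Ap_nonneg Bf_nonneg\<close>)


lemma cc_sums1: assumes "\<mu> \<ge> 0" "y \<ge> 0" "a \<ge> 0"
  shows "(\<lambda>k. cc \<mu> a y k * dd \<mu> k) sums (2 * a * exp a * e_mu \<mu> y + exp a * (y * e_mu \<mu> y))"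
proof -
  have eq: "cc \<mu> a y k * dd \<mu> k = (\<Sum>i\<le>k. (real i * Ap a i) * Bf \<mu> y (k - i))
      + (\<Sum>i\<le>k. Ap a i * (dd \<mu> (k-i) * Bf \<mu> y (k - i)))" for k
    unfolding cc_def sum_distrib_right sum.distrib[symmetric] by (rule sum.cong) (auto simp: term1)
  show ?thesis unfolding eq
    by (intro sums_add cp_sums) (use assms in \<open>auto simp: iAp_sums Ap_sums Bf_sums dBf_sums Ap_nonneg Bf_nonneg dd_nonneg\<close>)
qed

lemma cc_sums2: assumes "\<mu> \<ge> 0" "y \<ge> 0" "a \<ge> 0"
  shows "(\<lambda>k. cc \<mu> a y k * (dd \<mu> k)^2) sums
    (4 * (a * (a * exp a + exp a)) * e_mu \<mu> y + 2 * (2 * a * exp a * (y * e_mu \<mu> y))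
     + exp a * (y * (y * e_mu \<mu> y + e_mu \<mu> y + 2 * \<mu> * e_mu \<mu> (-y))))"
proof -
  have eq: "cc \<mu> a y k * (dd \<mu> k)^2 = (\<Sum>i\<le>k. ((real i)^2 * Ap a i) * Bf \<mu> y (k - i))
      + 2 * (\<Sum>i\<le>k. (real i * Ap a i) * (dd \<mu> (k-i) * Bf \<mu> y (k - i)))
      + (\<Sum>i\<le>k. Ap a i * ((dd \<mu> (k-i))^2 * Bf \<mu> y (k - i)))" for k
    unfolding cc_def sum_distrib_right sum_distrib_left sum.distrib[symmetric] by (rule sum.cong) (auto simp: term2)
  show ?thesis unfolding eq
    by (intro sums_add sums_mult cp_sums) (use assms in \<open>auto simp: i2Ap_sums iAp_sums Ap_sums Bf_sums dBf_sums d2Bf_sums Ap_nonneg Bf_nonneg dd_nonneg\<close>)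
qed


lemma cc_alt: "cc \<mu> a y k = (\<Sum>j=0..k div 2. a^j / fact j * Bf \<mu> y (k - 2*j))"
proof -
  have "cc \<mu> a y k = (\<Sum>i\<in>(\<lambda>j. 2*j) ` {0..k div 2}. Ap a i * Bf \<mu> y (k-i))"
    unfolding cc_def
  proof (rule sum.mono_neutral_right)
    show "(\<lambda>j. 2*j) ` {0..k div 2} \<subseteq> {..k}" by auto
    show "\<forall>i\<in>{..k} - (\<lambda>j. 2*j) ` {0..k div 2}. Ap a i * Bf \<mu> y (k - i) = 0"
    proof
      fix i assume i: "i \<in> {..k} - (\<lambda>j. 2*j) ` {0..k div 2}"
      have "odd i"
      proof
        assume "even i"
        then obtain j where "i = 2*j" by blast
        with i show False by auto
      qed
      thus "Ap a i * Bf \<mu> y (k - i) = 0" by (simp add: Ap_def)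
    qed
  qed auto
  also have "\<dots> = (\<Sum>j=0..k div 2. Ap a (2*j) * Bf \<mu> y (k - 2*j))"
    by (subst sum.reindex) (auto simp: inj_on_def)
  also have "\<dots> = (\<Sum>j=0..k div 2. a^j / fact j * Bf \<mu> y (k - 2*j))"
    by (simp add: Ap_def)
  finally show ?thesis .
qed

lemma hk_eq: assumes "\<mu> \<ge> 0"
  shows "hk \<mu> k (real n) \<alpha> / gamma_mu \<mu> k * x^k = cc \<mu> (\<alpha> * x\<^sup>2) (real n * x) k"
proof -
  have gk: "gamma_mu \<mu> k \<noteq> 0" using gamma_pos[OF assms] by (metis less_irrefl)
  have "hk \<mu> k (real n) \<alpha> / gamma_mu \<mu> k * x^k =
     (\<Sum>j = 0..k div 2. \<alpha> ^ j * real n ^ (k - 2 * j) / (fact j * gamma_mu \<mu> (k - 2 * j)) * x^k)"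
    unfolding hk_def using gk by (simp add: sum_distrib_right)
  also have "\<dots> = (\<Sum>j=0..k div 2. (\<alpha> * x\<^sup>2)^j / fact j * Bf \<mu> (real n * x) (k - 2*j))"
  proof (rule sum.cong)
    fix j assume "j \<in> {0..k div 2}"
    hence "k = 2*j + (k - 2*j)" by auto
    hence xk: "x^k = (x\<^sup>2)^j * x^(k-2*j)" by (metis power_add power_mult)
    show "\<alpha> ^ j * real n ^ (k - 2 * j) / (fact j * gamma_mu \<mu> (k - 2 * j)) * x^k =
       (\<alpha> * x\<^sup>2)^j / fact j * Bf \<mu> (real n * x) (k - 2*j)"
      unfolding xk Bf_def by (simp add: power_mult_distrib)
  qed simp
  finally show ?thesis by (simp add: cc_alt)
qed


lemma sup_le: assumes "CB g" "u \<ge> 0" shows "\<bar>g u\<bar> \<le> sup_norm g"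
proof -
  from assms(1) have "bounded (g ` {0..})" by (simp add: CB_def)
  then obtain B where B: "\<And>v. v \<in> {0..} \<Longrightarrow> \<bar>g v\<bar> \<le> B" by (auto simp: bounded_iff)
  have "bdd_above ((\<lambda>v. \<bar>g v\<bar>) ` {0..})" using B by (intro bdd_aboveI2[where M=B]) auto
  thus ?thesis unfolding sup_norm_def using assms(2) by (intro cSUP_upper) auto
qed

lemma sup_nonneg: "CB g \<Longrightarrow> sup_norm g \<ge> 0"
  using sup_le[of g 0] by linarith

lemma taylor: assumes "CB2 h h1 h2" "s \<ge> 0" "x \<ge> 0"
  shows "\<bar>h s - h x - h1 x * (s - x)\<bar> \<le> sup_norm h2 * (s - x)\<^sup>2"
proof -
  define M where "M = sup_norm h2"
  have cb: "CB h2" using assms(1) by (simp add: CB2_def)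
  have d1: "\<And>u. u \<ge> 0 \<Longrightarrow> (h has_real_derivative h1 u) (at u within {0..})"
   and d2: "\<And>u. u \<ge> 0 \<Longrightarrow> (h1 has_real_derivative h2 u) (at u within {0..})"
    using assms(1) by (auto simp: CB2_def)
  have b1: "\<bar>h1 u - h1 x\<bar> \<le> M * \<bar>u - x\<bar>" if "u \<ge> 0" for u
  proof -
    have "norm (h1 u - h1 x) \<le> M * norm (u - x)"
    proof (rule field_differentiable_bound[of "{0..}" h1 h2 M])
      show "convex {0::real..}" by (rule convex_real_interval)
      show "u \<in> {0..}" "x \<in> {0..}" using that assms(3) by auto
      fix z :: real assume "z \<in> {0..}"
      thus "(h1 has_field_derivative h2 z) (at z within {0..})" using d2 by simp
      show "norm (h2 z) \<le> M" unfolding M_def real_norm_def by (rule sup_le[OF cb]) (use \<open>z \<in> {0..}\<close> in simp)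
    qed
    thus ?thesis by simp
  qed
  define S where "S = {min x s..max x s}"
  have S0: "S \<subseteq> {0..}" using assms by (auto simp: S_def)
  have nb: "norm ((\<lambda>u. h u - h1 x * u) s - (\<lambda>u. h u - h1 x * u) x) \<le> (M * \<bar>s - x\<bar>) * norm (s - x)"
  proof (rule field_differentiable_bound[of S _ "\<lambda>u. h1 u - h1 x"])
    show "convex S" by (simp add: S_def)
    show "s \<in> S" "x \<in> S" by (auto simp: S_def)
    fix z assume z: "z \<in> S"
    hence z0: "z \<ge> 0" using S0 by auto
    have "((\<lambda>u. h u - h1 x * u) has_field_derivative h1 z - h1 x * 1) (at z within {0..})"
      by (intro DERIV_diff DERIV_cmult d1[OF z0] DERIV_ident)
    thus "((\<lambda>u. h u - h1 x * u) has_field_derivative h1 z - h1 x) (at z within S)"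
      using has_field_derivative_subset[OF _ S0] by simp
    have zx: "\<bar>z - x\<bar> \<le> \<bar>s - x\<bar>" using z unfolding S_def by (cases "x \<le> s") auto
    have M0: "M \<ge> 0" using sup_nonneg[OF cb] by (simp add: M_def)
    show "norm (h1 z - h1 x) \<le> M * \<bar>s - x\<bar>"
      using b1[OF z0] mult_left_mono[OF zx M0] by simp
  qed
  have e1: "(\<lambda>u. h u - h1 x * u) s - (\<lambda>u. h u - h1 x * u) x = h s - h x - h1 x * (s - x)"
    by (simp add: right_diff_distrib)
  have e2: "(M * \<bar>s - x\<bar>) * norm (s - x) = M * (s - x)\<^sup>2"
    by (simp add: power2_eq_square)
  have "\<bar>h s - h x - h1 x * (s - x)\<bar> = norm ((\<lambda>u. h u - h1 x * u) s - (\<lambda>u. h u - h1 x * u) x)"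
    by (simp only: e1 real_norm_def)
  also have "\<dots> \<le> M * (s - x)\<^sup>2" using nb e2 by linarith
  finally show ?thesis by (simp add: M_def)
qed


lemma alg1: fixes nn :: real assumes "nn > 0" "eB > 0" "ea > 0"
  shows "((2 * (\<alpha> * x\<^sup>2) * ea * eB + ea * ((nn * x) * eB)) / nn - x * (ea * eB)) / (ea * eB) = 2 * \<alpha> * x\<^sup>2 / nn"
  using assms by (simp add: field_simps)

lemma alg2: fixes nn :: real assumes "nn > 0" "eB > 0" "ea > 0"
  shows "((4 * ((\<alpha> * x\<^sup>2) * ((\<alpha> * x\<^sup>2) * ea + ea)) * eB + 2 * (2 * (\<alpha> * x\<^sup>2) * ea * ((nn * x) * eB))
     + ea * ((nn * x) * ((nn * x) * eB + eB + 2 * \<mu> * eN))) / nn\<^sup>2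
     - 2 * x * ((2 * (\<alpha> * x\<^sup>2) * ea * eB + ea * ((nn * x) * eB)) / nn) + x\<^sup>2 * (ea * eB)) / (ea * eB)
   = 1 / nn\<^sup>2 * x * (4 * x ^ 3 * \<alpha>\<^sup>2 + 4 * \<alpha> * x + nn) + 2 * \<mu> * x / nn * (eN / eB)"
  using assms by (simp add: field_simps power2_eq_square power3_eq_cube)


theorem lemma8:
  fixes \<alpha> \<mu> x :: real and n :: nat and h h1 h2 :: "real \<Rightarrow> real"
  assumes "\<alpha> \<ge> 0" "\<mu> \<ge> 0" "n \<ge> 1" "x \<ge> 0"
    and "CB2 h h1 h2"
  shows "\<bar>T_op \<alpha> \<mu> n h x - h x\<bar> \<le>
    (2 * \<alpha> * x\<^sup>2 / real n
     + (1 / (real n)\<^sup>2 * x * (4 * x ^ 3 * \<alpha>\<^sup>2 + 4 * \<alpha> * x + real n)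
        + 2 * \<mu> * x / real n * (e_mu \<mu> (- (real n * x)) / e_mu \<mu> (real n * x))))
    * CB2_norm h h1 h2"
proof -
  define a where "a = \<alpha> * x\<^sup>2"
  define y where "y = real n * x"
  define nn where "nn = real n"
  define eB where "eB = e_mu \<mu> y"
  define eN where "eN = e_mu \<mu> (-y)"
  define ea where "ea = exp a"
  define E where "E = ea * eB"
  define c where "c = cc \<mu> a y"
  define t where "t k = dd \<mu> k / nn" for k
  define M0 where "M0 = sup_norm h"
  define M1 where "M1 = sup_norm h1"
  define M2 where "M2 = sup_norm h2"
  define S1 where "S1 = 2 * a * ea * eB + ea * (y * eB)"
  define S2 where "S2 = 4 * (a * (a * ea + ea)) * eB + 2 * (2 * a * ea * (y * eB))
     + ea * (y * (y * eB + eB + 2 * \<mu> * eN))"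
  have cbs: "CB h" "CB h1" "CB h2" using assms(5) by (auto simp: CB2_def)
  have a0: "a \<ge> 0" using assms by (simp add: a_def)
  have y0: "y \<ge> 0" using assms by (simp add: y_def)
  have nn0: "nn > 0" using assms by (simp add: nn_def)
  have c0: "c k \<ge> 0" for k unfolding c_def by (rule cc_nonneg) (use assms a0 y0 in auto)
  have t0: "t k \<ge> 0" for k unfolding t_def using dd_nonneg[OF assms(2)] nn0 by simp
  have ea0: "ea > 0" by (simp add: ea_def)
  have eB0: "eB > 0"
  proof -
    have "0 < suminf (Bf \<mu> y)"
      by (rule suminf_pos2[where i=0]) (use Bf_sums[OF assms(2)] Bf_nonneg[OF assms(2) y0] gamma_0[OF assms(2)]
         in \<open>auto simp: sums_iff Bf_def\<close>)
    thus ?thesis using Bf_sums[OF assms(2), of y] by (simp add: eB_def sums_iff)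
  qed
  have E0: "E > 0" using ea0 eB0 by (simp add: E_def)
  have s0: "c sums E" unfolding c_def E_def ea_def eB_def by (rule cc_sums0) (use assms a0 y0 in auto)
  have s1: "(\<lambda>k. c k * dd \<mu> k) sums S1" unfolding c_def S1_def ea_def eB_def
    by (rule cc_sums1) (use assms a0 y0 in auto)
  have s2: "(\<lambda>k. c k * (dd \<mu> k)\<^sup>2) sums S2" unfolding c_def S2_def ea_def eB_def eN_def
    by (rule cc_sums2) (use assms a0 y0 in auto)
  define D1 where "D1 = S1 / nn - x * E"
  define D2 where "D2 = S2 / nn\<^sup>2 - 2 * x * (S1 / nn) + x\<^sup>2 * E"
  have sD1: "(\<lambda>k. c k * (t k - x)) sums D1"
  proof -
    have "(\<lambda>k. c k * dd \<mu> k / nn - x * c k) sums D1"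
      unfolding D1_def by (intro sums_diff sums_divide sums_mult s1 s0)
    thus ?thesis by (simp add: t_def algebra_simps)
  qed
  have sD2: "(\<lambda>k. c k * (t k - x)\<^sup>2) sums D2"
  proof -
    have "(\<lambda>k. c k * (dd \<mu> k)\<^sup>2 / nn\<^sup>2 - 2 * x * (c k * dd \<mu> k / nn) + x\<^sup>2 * c k) sums D2"
      unfolding D2_def by (intro sums_add sums_diff sums_divide sums_mult s1 s0 s2)
    moreover have "c k * (dd \<mu> k)\<^sup>2 / nn\<^sup>2 - 2 * x * (c k * dd \<mu> k / nn) + x\<^sup>2 * c k = c k * (t k - x)\<^sup>2" for k
      unfolding t_def using nn0 by (simp add: field_simps power2_eq_square)
    ultimately show ?thesis by simp
  qed
  have summ: "summable (\<lambda>k. c k * h (t k))"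
  proof (rule summable_comparison_test)
    show "summable (\<lambda>k. c k * M0)" using s0 by (intro summable_mult2) (simp add: sums_iff)
    show "\<exists>N. \<forall>k\<ge>N. norm (c k * h (t k)) \<le> c k * M0"
      using sup_le[OF cbs(1) t0] c0 by (auto simp: M0_def abs_mult intro!: mult_left_mono)
  qed
  define U where "U = (\<Sum>k. c k * h (t k))"
  have sU: "(\<lambda>k. c k * h (t k)) sums U" using summ by (simp add: U_def summable_sums)
  have T_eq: "T_op \<alpha> \<mu> n h x = U / E"
  proof -
    have "(\<lambda>k. hk \<mu> k (real n) \<alpha> / gamma_mu \<mu> k * x ^ k * h ((real k + 2 * \<mu> * theta k) / real n))
        = (\<lambda>k. c k * h (t k))"
    proof (rule ext)
      fix k
      have "hk \<mu> k (real n) \<alpha> / gamma_mu \<mu> k * x ^ k = c k"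
        unfolding c_def a_def y_def by (rule hk_eq[OF assms(2)])
      moreover have "(real k + 2 * \<mu> * theta k) / real n = t k" by (simp add: t_def dd_def nn_def)
      ultimately show "hk \<mu> k (real n) \<alpha> / gamma_mu \<mu> k * x ^ k * h ((real k + 2 * \<mu> * theta k) / real n)
        = c k * h (t k)" by simp
    qed
    thus ?thesis unfolding T_op_def U_def
      by (simp add: E_def ea_def eB_def a_def y_def)
  qed
  define R where "R = U - h x * E - h1 x * D1"
  have sR: "(\<lambda>k. c k * (h (t k) - h x - h1 x * (t k - x))) sums R"
  proof -
    have "(\<lambda>k. c k * h (t k) - h x * c k - h1 x * (c k * (t k - x))) sums R"
      unfolding R_def by (intro sums_diff sums_mult sU s0 sD1)
    thus ?thesis by (simp add: algebra_simps)
  qed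
  have Rb: "\<bar>R\<bar> \<le> M2 * D2"
  proof -
    have tb: "\<bar>h (t k) - h x - h1 x * (t k - x)\<bar> \<le> M2 * (t k - x)\<^sup>2" for k
      unfolding M2_def by (rule taylor[OF assms(5) t0 assms(4)])
    have up: "c k * (h (t k) - h x - h1 x * (t k - x)) \<le> M2 * (c k * (t k - x)\<^sup>2)" for k
    proof -
      have "c k * (h (t k) - h x - h1 x * (t k - x)) \<le> c k * (M2 * (t k - x)\<^sup>2)"
        using tb[of k] c0[of k] by (intro mult_left_mono) auto
      thus ?thesis by (simp add: mult_ac)
    qed
    have lo: "- (M2 * (c k * (t k - x)\<^sup>2)) \<le> c k * (h (t k) - h x - h1 x * (t k - x))" for k
    proof -
      have "c k * (- (M2 * (t k - x)\<^sup>2)) \<le> c k * (h (t k) - h x - h1 x * (t k - x))"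
        using tb[of k] c0[of k] by (intro mult_left_mono) auto
      thus ?thesis by (simp add: mult_ac)
    qed
    have "R \<le> M2 * D2" using sums_le[OF up sR sums_mult[OF sD2]] by simp
    moreover have "- (M2 * D2) \<le> R" using sums_le[OF lo sums_minus[OF sums_mult[OF sD2]] sR] by simp
    ultimately show ?thesis by linarith
  qed
  have D2pos: "D2 \<ge> 0" using sums_le[of "\<lambda>k. 0" "\<lambda>k. c k * (t k - x)\<^sup>2" 0 D2] sD2 c0 by auto
  define Del1 where "Del1 = 2 * \<alpha> * x\<^sup>2 / real n"
  define Del2 where "Del2 = 1 / (real n)\<^sup>2 * x * (4 * x ^ 3 * \<alpha>\<^sup>2 + 4 * \<alpha> * x + real n)
        + 2 * \<mu> * x / real n * (e_mu \<mu> (- (real n * x)) / e_mu \<mu> (real n * x))"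
  have Del1_eq: "D1 / E = Del1"
    unfolding D1_def S1_def E_def Del1_def a_def y_def nn_def[symmetric]
    by (rule alg1) (use nn0 eB0 ea0 in auto)
  have Del2_eq: "D2 / E = Del2"
    unfolding D2_def S2_def S1_def E_def Del2_def a_def y_def nn_def[symmetric] eN_def eB_def
    by (rule alg2) (use nn0 eB0 ea0 in \<open>auto simp: eB_def y_def nn_def\<close>)
  have Del1_0: "Del1 \<ge> 0" using assms nn0 by (simp add: Del1_def)
  have Del2_0: "Del2 \<ge> 0" using D2pos E0 Del2_eq[symmetric] by simp
  have M0_0: "M0 \<ge> 0" "M1 \<ge> 0" "M2 \<ge> 0" using sup_nonneg cbs by (auto simp: M0_def M1_def M2_def)
  have h1b: "\<bar>h1 x\<bar> \<le> M1" unfolding M1_def by (rule sup_le[OF cbs(2) assms(4)])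
  have diff: "T_op \<alpha> \<mu> n h x - h x = h1 x * Del1 + R / E"
    unfolding T_eq Del1_eq[symmetric] R_def using E0 by (simp add: field_simps)
  have "\<bar>T_op \<alpha> \<mu> n h x - h x\<bar> \<le> \<bar>h1 x\<bar> * Del1 + \<bar>R\<bar> / E"
    unfolding diff using Del1_0 E0 by (simp add: abs_mult abs_triangle_ineq[THEN order_trans])
  also have "\<dots> \<le> M1 * Del1 + M2 * Del2"
  proof -
    have "\<bar>R\<bar> / E \<le> M2 * D2 / E" using Rb E0 by (simp add: divide_right_mono)
    also have "\<dots> = M2 * Del2" using Del2_eq[symmetric] by (simp add: times_divide_eq_right)
    finally show ?thesis using mult_right_mono[OF h1b Del1_0] by linarith
  qed
  also have "\<dots> \<le> (Del1 + Del2) * (M0 + M1 + M2)"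
    using M0_0 Del1_0 Del2_0 by (simp add: algebra_simps add_nonneg_nonneg mult_nonneg_nonneg)
  finally show ?thesis by (simp add: Del1_def Del2_def CB2_norm_def M0_def M1_def M2_def)
qed

end
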